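(* For any graph $G$ with no isolated vertex, order $n$ and maximum degree $\Delta$, $$\left\lceil\frac{2n}{\Delta+1}\right\rceil\le\gamma_{(2,2,0)}(G)\le2\gamma(G).$$ Furthermore, if $G$ has minimum degree $\delta\ge2$, then $\gamma_{(2,2,0)}(G)\le\gamma_{\times2,t}(G)$.
   Context: All graphs are finite and simple; $N(v)$ is the open neighbourhood. $\gamma_{(2,2,0)}(G)$ is the minimum of $\sum_v f(v)$ over functions $f:V(G)\to\{0,1,2\}$ such that $\sum_{u\in N(v)}f(u)\ge2$ for every $v$ with $f(v)\in\{0,1\}$ (no condition on vertices with $f(v)=2$). $\gamma(G)$ is the domination number and $\gamma_{\times2,t}(G)$ is the minimum size of $S\subseteq V(G)$ such that every vertex has at least two neighbours in $S$. *)

theory Defs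
  imports Complex_Main
begin

definition simple_graph :: "'a set \<Rightarrow> ('a \<Rightarrow> 'a \<Rightarrow> bool) \<Rightarrow> bool" where
  "simple_graph V E \<longleftrightarrow> finite V \<and> (\<forall>u v. E u v \<longrightarrow> u \<in> V \<and> v \<in> V)
     \<and> (\<forall>u v. E u v \<longrightarrow> E v u) \<and> (\<forall>v. \<not> E v v)"

definition nbhd :: "'a set \<Rightarrow> ('a \<Rightarrow> 'a \<Rightarrow> bool) \<Rightarrow> 'a \<Rightarrow> 'a set" where
  "nbhd V E v = {u \<in> V. E v u}"

definition degree :: "'a set \<Rightarrow> ('a \<Rightarrow> 'a \<Rightarrow> bool) \<Rightarrow> 'a \<Rightarrow> nat" where
  "degree V E v = card (nbhd V E v)"

definition max_degree :: "'a set \<Rightarrow> ('a \<Rightarrow> 'a \<Rightarrow> bool) \<Rightarrow> nat" where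
  "max_degree V E = Max (degree V E ` V)"

definition min_degree :: "'a set \<Rightarrow> ('a \<Rightarrow> 'a \<Rightarrow> bool) \<Rightarrow> nat" where
  "min_degree V E = Min (degree V E ` V)"

text \<open>(2,2,0)-functions: f : V \<rightarrow> {0,1,2}, and every v with f v \<in> {0,1}
 has neighbourhood weight at least 2.  (Values outside V are irrelevant; we
 fix them to 0.)\<close>
definition is_220_function :: "'a set \<Rightarrow> ('a \<Rightarrow> 'a \<Rightarrow> bool) \<Rightarrow> ('a \<Rightarrow> nat) \<Rightarrow> bool" where
  "is_220_function V E f \<longleftrightarrow> (\<forall>v\<in>V. f v \<le> 2) \<and> (\<forall>v. v \<notin> V \<longrightarrow> f v = 0)
     \<and> (\<forall>v\<in>V. f v \<in> {0,1} \<longrightarrow> (\<Sum>u\<in>nbhd V E v. f u) \<ge> 2)"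

definition gamma_220 :: "'a set \<Rightarrow> ('a \<Rightarrow> 'a \<Rightarrow> bool) \<Rightarrow> nat" where
  "gamma_220 V E = Min {(\<Sum>v\<in>V. f v) | f. is_220_function V E f}"

definition dominating_set :: "'a set \<Rightarrow> ('a \<Rightarrow> 'a \<Rightarrow> bool) \<Rightarrow> 'a set \<Rightarrow> bool" where
  "dominating_set V E S \<longleftrightarrow> S \<subseteq> V \<and> (\<forall>v\<in>V. v \<in> S \<or> (\<exists>u\<in>S. E v u))"

definition domination_number :: "'a set \<Rightarrow> ('a \<Rightarrow> 'a \<Rightarrow> bool) \<Rightarrow> nat" where
  "domination_number V E = Min {card S | S. dominating_set V E S}"

definition double_total_dominating_set :: "'a set \<Rightarrow> ('a \<Rightarrow> 'a \<Rightarrow> bool) \<Rightarrow> 'a set \<Rightarrow> bool" where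
  "double_total_dominating_set V E S \<longleftrightarrow> S \<subseteq> V \<and> (\<forall>v\<in>V. card (nbhd V E v \<inter> S) \<ge> 2)"

definition double_total_domination_number :: "'a set \<Rightarrow> ('a \<Rightarrow> 'a \<Rightarrow> bool) \<Rightarrow> nat" where
  "double_total_domination_number V E = Min {card S | S. double_total_dominating_set V E S}"

end

theory Submission
  imports Defs
begin

lemma g220_set_finite:
  assumes "finite V"
  shows "finite {(\<Sum>v\<in>V. f v) | f. is_220_function V E f}"
proof -
  have "{(\<Sum>v\<in>V. f v) | f. is_220_function V E f} \<subseteq> {..2 * card V}"
  proof
    fix x assume "x \<in> {(\<Sum>v\<in>V. f v) | f. is_220_function V E f}"
    then obtain f where x: "x = (\<Sum>v\<in>V. f v)" and f: "is_220_function V E f" by blast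
    have "(\<Sum>v\<in>V. f v) \<le> (\<Sum>v\<in>V. 2)"
      by (rule sum_mono) (use f in \<open>auto simp: is_220_function_def\<close>)
    then show "x \<in> {..2 * card V}" using x by auto
  qed
  then show ?thesis using finite_subset by blast
qed

lemma g220_le:
  assumes "finite V" "is_220_function V E f"
  shows "gamma_220 V E \<le> (\<Sum>v\<in>V. f v)"
  unfolding gamma_220_def using g220_set_finite[OF assms(1)] assms(2)
  by (intro Min_le) auto

lemma g220_attained:
  assumes "finite V"
  shows "\<exists>f. is_220_function V E f \<and> gamma_220 V E = (\<Sum>v\<in>V. f v)"
proof -
  let ?f = "\<lambda>v. if v \<in> V then 2::nat else 0"
  have "is_220_function V E ?f" unfolding is_220_function_def by auto
  then have ne: "{(\<Sum>v\<in>V. f v) | f. is_220_function V E f} \<noteq> {}" by blast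
  have "gamma_220 V E \<in> {(\<Sum>v\<in>V. f v) | f. is_220_function V E f}"
    unfolding gamma_220_def using g220_set_finite[OF assms] ne by (rule Min_in)
  then show ?thesis by blast
qed

theorem theorem31:
  fixes V :: "'a set" and E :: "'a \<Rightarrow> 'a \<Rightarrow> bool"
  assumes "simple_graph V E" and "V \<noteq> {}"
    and no_isolated: "\<forall>v\<in>V. nbhd V E v \<noteq> {}"
  shows "\<lceil>(2 * real (card V)) / (real (max_degree V E) + 1)\<rceil> \<le> int (gamma_220 V E)
     \<and> gamma_220 V E \<le> 2 * domination_number V E
     \<and> (min_degree V E \<ge> 2 \<longrightarrow> gamma_220 V E \<le> double_total_domination_number V E)"
proof (intro conjI impI)
  have fin: "finite V" and sym: "\<And>u v. E u v \<Longrightarrow> E v u" and inV: "\<And>u v. E u v \<Longrightarrow> u \<in> V \<and> v \<in> V"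
    using assms(1) unfolding simple_graph_def by auto
  have finN: "\<And>v. finite (nbhd V E v)" using fin unfolding nbhd_def by auto
  show "\<lceil>(2 * real (card V)) / (real (max_degree V E) + 1)\<rceil> \<le> int (gamma_220 V E)"
  proof -
    obtain f where f: "is_220_function V E f" and w: "gamma_220 V E = (\<Sum>v\<in>V. f v)"
      using g220_attained[OF fin] by blast
    let ?D = "max_degree V E"
    have degle: "\<And>u. u \<in> V \<Longrightarrow> degree V E u \<le> ?D"
      unfolding max_degree_def using fin by (intro Max_ge) auto
    have each: "\<And>v. v \<in> V \<Longrightarrow> 2 \<le> f v + (\<Sum>u\<in>nbhd V E v. f u)"
    proof -
      fix v assume v: "v \<in> V"
      show "2 \<le> f v + (\<Sum>u\<in>nbhd V E v. f u)"
      proof (cases "f v \<in> {0,1}")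
        case True then show ?thesis using f v unfolding is_220_function_def by auto
      next
        case False then have "f v \<ge> 2" by auto
        then show ?thesis by linarith
      qed
    qed
    have "(\<Sum>v\<in>V. (2::nat)) \<le> (\<Sum>v\<in>V. f v + (\<Sum>u\<in>nbhd V E v. f u))"
      by (rule sum_mono) (use each in auto)
    also have "\<dots> = (\<Sum>v\<in>V. f v) + (\<Sum>v\<in>V. \<Sum>u\<in>nbhd V E v. f u)"
      by (simp add: sum.distrib)
    also have "(\<Sum>v\<in>V. \<Sum>u\<in>nbhd V E v. f u) = (\<Sum>v\<in>V. \<Sum>u\<in>V. if E v u then f u else 0)"
      unfolding nbhd_def using fin by (simp add: sum.inter_filter)
    also have "\<dots> = (\<Sum>u\<in>V. \<Sum>v\<in>V. if E v u then f u else 0)"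
      by (rule sum.swap)
    also have "\<dots> = (\<Sum>u\<in>V. f u * degree V E u)"
    proof (rule sum.cong[OF refl])
      fix u assume "u \<in> V"
      have "(\<Sum>v\<in>V. if E v u then f u else 0) = (\<Sum>v\<in>{v\<in>V. E v u}. f u)"
        using fin by (simp add: sum.inter_filter[symmetric])
      also have "\<dots> = f u * card {v\<in>V. E v u}" by simp
      also have "{v\<in>V. E v u} = nbhd V E u" unfolding nbhd_def using sym by blast
      finally show "(\<Sum>v\<in>V. if E v u then f u else 0) = f u * degree V E u"
        unfolding degree_def by simp
    qed
    also have "\<dots> \<le> (\<Sum>u\<in>V. f u * ?D)"
      by (rule sum_mono) (use degle in auto)
    also have "\<dots> = (\<Sum>u\<in>V. f u) * ?D" by (simp add: sum_distrib_right)
    finally have key: "2 * card V \<le> gamma_220 V E * (?D + 1)" using w by (simp add: algebra_simps)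
    then have "2 * real (card V) \<le> real (gamma_220 V E) * (real ?D + 1)"
      by (metis of_nat_1 of_nat_add of_nat_le_iff of_nat_mult of_nat_numeral)
    then have "(2 * real (card V)) / (real ?D + 1) \<le> real (gamma_220 V E)"
      by (simp add: divide_le_eq)
    then show ?thesis by (simp add: ceiling_le_iff)
  qed
  show "gamma_220 V E \<le> 2 * domination_number V E"
  proof -
    have finS: "finite {card S | S. dominating_set V E S}"
    proof -
      have "{card S | S. dominating_set V E S} \<subseteq> card ` Pow V"
        unfolding dominating_set_def by auto
      then show ?thesis using fin finite_subset by blast
    qed
    have "dominating_set V E V" unfolding dominating_set_def by auto
    then have ne: "{card S | S. dominating_set V E S} \<noteq> {}" by blast
    have "domination_number V E \<in> {card S | S. dominating_set V E S}"
      unfolding domination_number_def using finS ne by (rule Min_in)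
    then obtain S where S: "dominating_set V E S" and c: "domination_number V E = card S" by blast
    have SV: "S \<subseteq> V" using S unfolding dominating_set_def by auto
    let ?f = "\<lambda>v. if v \<in> S then 2::nat else 0"
    have "is_220_function V E ?f"
      unfolding is_220_function_def
    proof (intro conjI ballI allI impI)
      fix v assume v: "v \<in> V" and "?f v \<in> {0,1}"
      then have "v \<notin> S" by auto
      then obtain u where u: "u \<in> S" "E v u" using S v unfolding dominating_set_def by auto
      then have un: "u \<in> nbhd V E v" using SV unfolding nbhd_def by auto
      have "?f u \<le> (\<Sum>w\<in>nbhd V E v. ?f w)"
        by (rule member_le_sum[OF un]) (auto simp: finN)
      then show "2 \<le> (\<Sum>w\<in>nbhd V E v. ?f w)" using u by simp
    qed (use SV in auto)
    then have "gamma_220 V E \<le> (\<Sum>v\<in>V. ?f v)" by (rule g220_le[OF fin])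
    also have "(\<Sum>v\<in>V. ?f v) = (\<Sum>v\<in>S. 2)"
      using fin SV by (simp add: sum.If_cases Int_absorb1)
    finally show ?thesis using c by simp
  qed
  assume md: "2 \<le> min_degree V E"
  show "gamma_220 V E \<le> double_total_domination_number V E"
  proof -
    have finS: "finite {card S | S. double_total_dominating_set V E S}"
    proof -
      have "{card S | S. double_total_dominating_set V E S} \<subseteq> card ` Pow V"
        unfolding double_total_dominating_set_def by auto
      then show ?thesis using fin finite_subset by blast
    qed
    have "\<And>v. v \<in> V \<Longrightarrow> min_degree V E \<le> degree V E v"
      unfolding min_degree_def using fin by (intro Min_le) auto
    then have "double_total_dominating_set V E V"
      unfolding double_total_dominating_set_def degree_def using md
      by (auto simp: nbhd_def Int_absorb2 intro: order.trans)
    then have ne: "{card S | S. double_total_dominating_set V E S} \<noteq> {}" by blast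
    have "double_total_domination_number V E \<in> {card S | S. double_total_dominating_set V E S}"
      unfolding double_total_domination_number_def using finS ne by (rule Min_in)
    then obtain S where S: "double_total_dominating_set V E S"
      and c: "double_total_domination_number V E = card S" by blast
    have SV: "S \<subseteq> V" using S unfolding double_total_dominating_set_def by auto
    let ?f = "\<lambda>v. if v \<in> S then 1::nat else 0"
    have "is_220_function V E ?f"
      unfolding is_220_function_def
    proof (intro conjI ballI allI impI)
      fix v assume v: "v \<in> V"
      have "(\<Sum>w\<in>nbhd V E v. ?f w) = card (nbhd V E v \<inter> S)"
        using finN[of v] by (simp add: sum.If_cases)
      then show "2 \<le> (\<Sum>w\<in>nbhd V E v. ?f w)"
        using S v unfolding double_total_dominating_set_def by auto
    qed (use SV in auto)
    then have "gamma_220 V E \<le> (\<Sum>v\<in>V. ?f v)" by (rule g220_le[OF fin])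
    also have "(\<Sum>v\<in>V. ?f v) = card S"
      using fin SV by (simp add: sum.If_cases Int_absorb1)
    finally show ?thesis using c by simp
  qed
qed

end
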